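(* Let $T>0$. The map $G$ defined by $G(X)_t=\tau_tX_t$, $t\in[0,T]$, is continuous from $\mathcal{C}([0,T],\mathcal{S}')$ into itself.
   Context: $\mathcal{S}$ is the Schwartz space on $\mathbb{R}$ (smooth functions with the topology of the semi-norms $\sup_x|x^\beta\phi^{(\gamma)}(x)|$), $\mathcal{S}'$ its dual, the space of tempered distributions, with duality $\langle\mu,\phi\rangle$. For $x\in\mathbb{R}$ and $\mu\in\mathcal{S}'$, $\tau_x\mu$ is the tempered distribution with $\langle\tau_x\mu,\phi\rangle=\langle\mu,\tau_x\phi\rangle$, where $\tau_x\phi(\cdot)=\phi(\cdot-x)$. A path $X:[0,T]\to\mathcal{S}'$ belongs to $\mathcal{C}([0,T],\mathcal{S}')$ (resp. $\mathcal{D}([0,T],\mathcal{S}')$) iff $t\mapsto\langle X_t,\phi\rangle$ is continuous (resp. right-continuous with left limits) for every $\phi\in\mathcal{S}$; these spaces carry their usual (uniform, resp. Skorokhod) topologies. *)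

theory Defs
  imports "HOL-Analysis.Analysis"
begin

type_synonym test = "real \<Rightarrow> real"
type_synonym distr = "test \<Rightarrow> real"

definition smooth :: "test \<Rightarrow> bool" where
  "smooth f \<longleftrightarrow> (\<forall>k x. ((deriv ^^ k) f) differentiable (at x))"

definition schwartz :: "test set" where
  "schwartz = {f. smooth f \<and>
     (\<forall>\<beta> \<gamma>. \<exists>C. \<forall>x. \<bar>x ^ \<beta> * (deriv ^^ \<gamma>) f x\<bar> \<le> C)}"

definition schwartz_bounded :: "test set \<Rightarrow> bool" where
  "schwartz_bounded B \<longleftrightarrow> B \<subseteq> schwartz \<and>
     (\<forall>\<beta> \<gamma>. \<exists>C. \<forall>\<phi>\<in>B. \<forall>x. \<bar>x ^ \<beta> * (deriv ^^ \<gamma>) \<phi> x\<bar> \<le> C)"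

text \<open>Tempered distributions: linear functionals on the Schwartz space that are continuous,
  i.e. dominated by a constant times the maximum of finitely many semi-norms.\<close>
definition tempered :: "distr \<Rightarrow> bool" where
  "tempered \<mu> \<longleftrightarrow>
     (\<forall>\<phi>\<in>schwartz. \<forall>\<psi>\<in>schwartz. \<forall>a b. \<mu> (\<lambda>x. a * \<phi> x + b * \<psi> x) = a * \<mu> \<phi> + b * \<mu> \<psi>) \<and>
     (\<exists>C N. \<forall>\<phi>\<in>schwartz. \<forall>M.
        (\<forall>\<beta>\<le>N. \<forall>\<gamma>\<le>N. \<forall>x. \<bar>x ^ \<beta> * (deriv ^^ \<gamma>) \<phi> x\<bar> \<le> M) \<longrightarrow> \<bar>\<mu> \<phi>\<bar> \<le> C * M)"

definition transl_fun :: "real \<Rightarrow> test \<Rightarrow> test" where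
  "transl_fun a \<phi> = (\<lambda>y. \<phi> (y - a))"

definition transl :: "real \<Rightarrow> distr \<Rightarrow> distr" where
  "transl a \<mu> = (\<lambda>\<phi>. \<mu> (transl_fun a \<phi>))"

text \<open>Continuous paths [0,T] -> S' (weakly continuous, equivalently strongly continuous).\<close>
definition pathsC :: "real \<Rightarrow> (real \<Rightarrow> distr) set" where
  "pathsC T = {X. (\<forall>t\<in>{0..T}. tempered (X t)) \<and>
                  (\<forall>\<phi>\<in>schwartz. continuous_on {0..T} (\<lambda>t. X t \<phi>))}"

definition pathball :: "real \<Rightarrow> (real \<Rightarrow> distr) \<Rightarrow> test set \<Rightarrow> real \<Rightarrow> (real \<Rightarrow> distr) set" where
  "pathball T X B \<epsilon> = {Y \<in> pathsC T. \<exists>e<\<epsilon>. \<forall>t\<in>{0..T}. \<forall>\<phi>\<in>B. \<bar>Y t \<phi> - X t \<phi>\<bar> \<le> e}"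

text \<open>The usual topology of uniform convergence on [0,T] for the strong topology of S'.\<close>
definition pathsC_topology :: "real \<Rightarrow> (real \<Rightarrow> distr) topology" where
  "pathsC_topology T = topology_generated_by
     {pathball T X B \<epsilon> | X B \<epsilon>. X \<in> pathsC T \<and> schwartz_bounded B \<and> \<epsilon> > 0}"

definition Gmap :: "(real \<Rightarrow> distr) \<Rightarrow> (real \<Rightarrow> distr)" where
  "Gmap X = (\<lambda>t. transl t (X t))"

end

theory Submission
  imports Defs
begin

definition semi :: "nat \<Rightarrow> test \<Rightarrow> real \<Rightarrow> bool" where
  "semi N \<phi> M \<longleftrightarrow> (\<forall>\<beta>\<le>N. \<forall>\<gamma>\<le>N. \<forall>x. \<bar>x ^ \<beta> * (deriv ^^ \<gamma>) \<phi> x\<bar> \<le> M)"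

lemma deriv_Suc: "(deriv ^^ Suc k) f = deriv ((deriv ^^ k) f)" by simp

lemma smooth_DERIV: "smooth f \<Longrightarrow> ((deriv ^^ k) f has_real_derivative (deriv ^^ Suc k) f x) (at x)"
  unfolding smooth_def deriv_Suc by (simp add: DERIV_deriv_iff_real_differentiable)

lemma deriv_transl:
  assumes "smooth f"
  shows "(deriv ^^ k) (transl_fun a f) = transl_fun a ((deriv ^^ k) f)"
proof (induction k)
  case 0 then show ?case by simp
next
  case (Suc k)
  have "deriv (transl_fun a ((deriv ^^ k) f)) y = transl_fun a ((deriv ^^ Suc k) f) y" for y
  proof -
    have "((deriv ^^ k) f has_real_derivative (deriv ^^ Suc k) f (y - a)) (at (y + - a))"
      using smooth_DERIV[OF assms] by simp
    then have "((\<lambda>x. (deriv ^^ k) f (x + - a)) has_real_derivative (deriv ^^ Suc k) f (y - a)) (at y)"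
      using DERIV_shift by blast
    then show ?thesis unfolding transl_fun_def by (simp add: DERIV_imp_deriv)
  qed
  then have *: "deriv (transl_fun a ((deriv ^^ k) f)) = transl_fun a ((deriv ^^ Suc k) f)" by (rule ext)
  have "(deriv ^^ Suc k) (transl_fun a f) = deriv (transl_fun a ((deriv ^^ k) f))"
    by (simp only: deriv_Suc Suc.IH)
  then show ?case using * by simp
qed

lemma smooth_transl: "smooth f \<Longrightarrow> smooth (transl_fun a f)"
proof -
  assume f: "smooth f"
  have "((deriv ^^ k) (transl_fun a f)) differentiable (at x)" for k x
  proof -
    have "((deriv ^^ k) f has_real_derivative (deriv ^^ Suc k) f (x - a)) (at (x + - a))"
      using smooth_DERIV[OF f] by simp
    then have "((\<lambda>y. (deriv ^^ k) f (y + - a)) has_real_derivative (deriv ^^ Suc k) f (x - a)) (at x)"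
      using DERIV_shift by blast
    then have "(transl_fun a ((deriv ^^ k) f)) differentiable (at x)"
      unfolding transl_fun_def by (auto simp: real_differentiable_def)
    then show ?thesis by (simp only: deriv_transl[OF f])
  qed
  then show ?thesis unfolding smooth_def by blast
qed

lemma deriv_lin:
  assumes f: "smooth f" and g: "smooth g"
  shows "(deriv ^^ k) (\<lambda>x. a * f x + b * g x) = (\<lambda>x. a * (deriv ^^ k) f x + b * (deriv ^^ k) g x)"
proof (induction k)
  case 0 then show ?case by simp
next
  case (Suc k)
  have "((\<lambda>x. a * (deriv ^^ k) f x + b * (deriv ^^ k) g x) has_real_derivative
        a * (deriv ^^ Suc k) f y + b * (deriv ^^ Suc k) g y) (at y)" for y
    by (intro DERIV_add DERIV_cmult smooth_DERIV f g)
  then have *: "deriv (\<lambda>x. a * (deriv ^^ k) f x + b * (deriv ^^ k) g x) =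
     (\<lambda>y. a * (deriv ^^ Suc k) f y + b * (deriv ^^ Suc k) g y)"
    by (intro ext DERIV_imp_deriv)
  have "(deriv ^^ Suc k) (\<lambda>x. a * f x + b * g x) = deriv (\<lambda>x. a * (deriv ^^ k) f x + b * (deriv ^^ k) g x)"
    by (simp only: deriv_Suc Suc.IH)
  then show ?case using * by simp
qed

lemma smooth_lin:
  assumes f: "smooth f" and g: "smooth g"
  shows "smooth (\<lambda>x. a * f x + b * g x)"
proof -
  have "((deriv ^^ k) (\<lambda>x. a * f x + b * g x)) differentiable (at y)" for k y
  proof -
    have "((\<lambda>x. a * (deriv ^^ k) f x + b * (deriv ^^ k) g x) has_real_derivative
        a * (deriv ^^ Suc k) f y + b * (deriv ^^ Suc k) g y) (at y)"
      by (intro DERIV_add DERIV_cmult smooth_DERIV f g)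
    then show ?thesis unfolding deriv_lin[OF f g] by (auto simp: real_differentiable_def)
  qed
  then show ?thesis unfolding smooth_def by blast
qed

lemma KI:
  fixes x y g :: real
  shows "\<bar>x\<bar> ^ \<beta> * \<bar>g\<bar> \<le> (1 + \<bar>x - y\<bar>) ^ \<beta> * max \<bar>g\<bar> (\<bar>y\<bar> ^ \<beta> * \<bar>g\<bar>)"
proof -
  have m1: "1 \<le> max 1 \<bar>y\<bar>" by simp
  have a1: "\<bar>x - y\<bar> \<le> \<bar>x - y\<bar> * max 1 \<bar>y\<bar>"
    using mult_left_mono[OF m1, of "\<bar>x - y\<bar>"] by simp
  have a2: "\<bar>y\<bar> \<le> max 1 \<bar>y\<bar>" by simp
  have "\<bar>x\<bar> \<le> \<bar>y\<bar> + \<bar>x - y\<bar>" by linarith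
  also have "\<dots> \<le> max 1 \<bar>y\<bar> + \<bar>x - y\<bar> * max 1 \<bar>y\<bar>"
    using a1 a2 by linarith
  also have "\<dots> = (1 + \<bar>x - y\<bar>) * max 1 \<bar>y\<bar>" by (simp add: algebra_simps)
  finally have "\<bar>x\<bar> ^ \<beta> \<le> ((1 + \<bar>x - y\<bar>) * max 1 \<bar>y\<bar>) ^ \<beta>"
    by (intro power_mono) simp_all
  also have "\<dots> = (1 + \<bar>x - y\<bar>) ^ \<beta> * (max 1 \<bar>y\<bar>) ^ \<beta>" by (simp only: power_mult_distrib)
  finally have "\<bar>x\<bar> ^ \<beta> * \<bar>g\<bar> \<le> (1 + \<bar>x - y\<bar>) ^ \<beta> * (max 1 \<bar>y\<bar>) ^ \<beta> * \<bar>g\<bar>"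
    by (rule mult_right_mono) simp
  then have 1: "\<bar>x\<bar> ^ \<beta> * \<bar>g\<bar> \<le> (1 + \<bar>x - y\<bar>) ^ \<beta> * ((max 1 \<bar>y\<bar>) ^ \<beta> * \<bar>g\<bar>)"
    by (simp only: mult.assoc)
  have 2: "(max 1 \<bar>y\<bar>) ^ \<beta> * \<bar>g\<bar> \<le> max \<bar>g\<bar> (\<bar>y\<bar> ^ \<beta> * \<bar>g\<bar>)"
  proof (cases "\<bar>y\<bar> \<le> 1")
    case True then have "max 1 \<bar>y\<bar> = 1" by simp
    then show ?thesis by simp
  next
    case False then have "max 1 \<bar>y\<bar> = \<bar>y\<bar>" by simp
    then show ?thesis by simp
  qed
  have 3: "(1 + \<bar>x - y\<bar>) ^ \<beta> * ((max 1 \<bar>y\<bar>) ^ \<beta> * \<bar>g\<bar>) \<le> (1 + \<bar>x - y\<bar>) ^ \<beta> * max \<bar>g\<bar> (\<bar>y\<bar> ^ \<beta> * \<bar>g\<bar>)"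
    by (rule mult_left_mono[OF 2]) simp
  show ?thesis using 1 3 by (rule order_trans)
qed

lemma transl_pt:
  assumes "smooth \<phi>"
  shows "\<bar>x ^ \<beta> * (deriv ^^ \<gamma>) (transl_fun a \<phi>) x\<bar> \<le>
    (1 + \<bar>a\<bar>) ^ \<beta> * max \<bar>(deriv ^^ \<gamma>) \<phi> (x - a)\<bar> \<bar>(x - a) ^ \<beta> * (deriv ^^ \<gamma>) \<phi> (x - a)\<bar>"
proof -
  define g where "g = (deriv ^^ \<gamma>) \<phi> (x - a)"
  have e: "(deriv ^^ \<gamma>) (transl_fun a \<phi>) x = g" unfolding g_def by (simp only: deriv_transl[OF assms]) (simp add: transl_fun_def)
  have 1: "\<bar>x ^ \<beta> * g\<bar> = \<bar>x\<bar> ^ \<beta> * \<bar>g\<bar>" "\<bar>(x - a) ^ \<beta> * g\<bar> = \<bar>x - a\<bar> ^ \<beta> * \<bar>g\<bar>"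
    by (simp_all only: abs_mult power_abs)
  have 2: "\<bar>x - (x - a)\<bar> = \<bar>a\<bar>" by simp
  show ?thesis unfolding e g_def[symmetric] 1 using KI[of x \<beta> g "x - a"] unfolding 2 .
qed

lemma schwartz_transl:
  assumes "\<phi> \<in> schwartz" shows "transl_fun a \<phi> \<in> schwartz"
proof -
  have sm: "smooth \<phi>" using assms schwartz_def by blast
  have "\<exists>C. \<forall>x. \<bar>x ^ \<beta> * (deriv ^^ \<gamma>) (transl_fun a \<phi>) x\<bar> \<le> C" for \<beta> \<gamma>
  proof -
    obtain C0 where C0: "\<And>x. \<bar>x ^ 0 * (deriv ^^ \<gamma>) \<phi> x\<bar> \<le> C0" using assms schwartz_def by blast
    obtain C1 where C1: "\<And>x. \<bar>x ^ \<beta> * (deriv ^^ \<gamma>) \<phi> x\<bar> \<le> C1" using assms schwartz_def by blast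
    have "\<bar>x ^ \<beta> * (deriv ^^ \<gamma>) (transl_fun a \<phi>) x\<bar> \<le> (1 + \<bar>a\<bar>) ^ \<beta> * max C0 C1" for x
    proof -
      have "max \<bar>(deriv ^^ \<gamma>) \<phi> (x - a)\<bar> \<bar>(x - a) ^ \<beta> * (deriv ^^ \<gamma>) \<phi> (x - a)\<bar> \<le> max C0 C1"
        using C0[of "x-a"] C1[of "x - a"] by auto
      then have "(1 + \<bar>a\<bar>) ^ \<beta> * max \<bar>(deriv ^^ \<gamma>) \<phi> (x - a)\<bar> \<bar>(x - a) ^ \<beta> * (deriv ^^ \<gamma>) \<phi> (x - a)\<bar> \<le> (1 + \<bar>a\<bar>) ^ \<beta> * max C0 C1"
        by (intro mult_left_mono) auto
      then show ?thesis by (rule order_trans[OF transl_pt[OF sm]])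
    qed
    then show ?thesis by blast
  qed
  then show ?thesis using smooth_transl[OF sm] unfolding schwartz_def by blast
qed

lemma semi_nonneg: "semi N \<phi> M \<Longrightarrow> 0 \<le> M"
proof -
  assume "semi N \<phi> M"
  then have "\<bar>0 ^ 0 * (deriv ^^ 0) \<phi> 0\<bar> \<le> M" unfolding semi_def by blast
  then show ?thesis using abs_ge_zero order_trans by blast
qed

lemma semi_transl:
  assumes "smooth \<phi>" "semi N \<phi> M"
  shows "semi N (transl_fun a \<phi>) ((1 + \<bar>a\<bar>) ^ N * M)"
  unfolding semi_def
proof (intro allI impI)
  fix \<beta> \<gamma> x assume b: "\<beta> \<le> N" and g: "\<gamma> \<le> N"
  have M0: "0 \<le> M" using semi_nonneg assms(2) .
  have m: "max \<bar>(deriv ^^ \<gamma>) \<phi> (x - a)\<bar> \<bar>(x - a) ^ \<beta> * (deriv ^^ \<gamma>) \<phi> (x - a)\<bar> \<le> M"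
  proof -
    have "\<bar>(x - a) ^ 0 * (deriv ^^ \<gamma>) \<phi> (x - a)\<bar> \<le> M" "\<bar>(x - a) ^ \<beta> * (deriv ^^ \<gamma>) \<phi> (x - a)\<bar> \<le> M"
      using assms(2) b g unfolding semi_def by blast+
    then show ?thesis by simp
  qed
  have p: "(1 + \<bar>a\<bar>) ^ \<beta> \<le> (1 + \<bar>a\<bar>) ^ N" using b by (intro power_increasing) auto
  show "\<bar>x ^ \<beta> * (deriv ^^ \<gamma>) (transl_fun a \<phi>) x\<bar> \<le> (1 + \<bar>a\<bar>) ^ N * M"
  proof -
    have "(1 + \<bar>a\<bar>) ^ \<beta> * max \<bar>(deriv ^^ \<gamma>) \<phi> (x - a)\<bar> \<bar>(x - a) ^ \<beta> * (deriv ^^ \<gamma>) \<phi> (x - a)\<bar> \<le> (1 + \<bar>a\<bar>) ^ N * M"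
      by (rule mult_mono[OF p m]) (use M0 in auto)
    then show ?thesis by (rule order_trans[OF transl_pt[OF assms(1)]])
  qed
qed

lemma schwartz_lin:
  assumes "f \<in> schwartz" "g \<in> schwartz"
  shows "(\<lambda>x. a * f x + b * g x) \<in> schwartz"
proof -
  have sm: "smooth f" "smooth g" using assms schwartz_def by blast+
  have "\<exists>C. \<forall>x. \<bar>x ^ \<beta> * (deriv ^^ \<gamma>) (\<lambda>x. a * f x + b * g x) x\<bar> \<le> C" for \<beta> \<gamma>
  proof -
    obtain C0 where C0: "\<And>x. \<bar>x ^ \<beta> * (deriv ^^ \<gamma>) f x\<bar> \<le> C0" using assms schwartz_def by blast
    obtain C1 where C1: "\<And>x. \<bar>x ^ \<beta> * (deriv ^^ \<gamma>) g x\<bar> \<le> C1" using assms schwartz_def by blast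
    have "\<bar>x ^ \<beta> * (deriv ^^ \<gamma>) (\<lambda>x. a * f x + b * g x) x\<bar> \<le> \<bar>a\<bar> * C0 + \<bar>b\<bar> * C1" for x
    proof -
      have "\<bar>x ^ \<beta> * (deriv ^^ \<gamma>) (\<lambda>x. a * f x + b * g x) x\<bar>
          = \<bar>a * (x ^ \<beta> * (deriv ^^ \<gamma>) f x) + b * (x ^ \<beta> * (deriv ^^ \<gamma>) g x)\<bar>"
        by (simp add: deriv_lin[OF sm] algebra_simps)
      also have "\<dots> \<le> \<bar>a\<bar> * \<bar>x ^ \<beta> * (deriv ^^ \<gamma>) f x\<bar> + \<bar>b\<bar> * \<bar>x ^ \<beta> * (deriv ^^ \<gamma>) g x\<bar>"
        using abs_triangle_ineq[of "a * (x ^ \<beta> * (deriv ^^ \<gamma>) f x)" "b * (x ^ \<beta> * (deriv ^^ \<gamma>) g x)"] by (simp add: abs_mult)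
      also have "\<dots> \<le> \<bar>a\<bar> * C0 + \<bar>b\<bar> * C1"
        by (intro add_mono mult_left_mono C0 C1) auto
      finally show ?thesis .
    qed
    then show ?thesis by blast
  qed
  then show ?thesis using smooth_lin[OF sm] unfolding schwartz_def by blast
qed

lemma semi_lin:
  assumes "smooth f" "smooth g" "semi N f M1" "semi N g M2"
  shows "semi N (\<lambda>x. a * f x + b * g x) (\<bar>a\<bar> * M1 + \<bar>b\<bar> * M2)"
  unfolding semi_def
proof (intro allI impI)
  fix \<beta> \<gamma> x assume b: "\<beta> \<le> N" and g: "\<gamma> \<le> N"
  have "\<bar>x ^ \<beta> * (deriv ^^ \<gamma>) (\<lambda>x. a * f x + b * g x) x\<bar>
      = \<bar>a * (x ^ \<beta> * (deriv ^^ \<gamma>) f x) + b * (x ^ \<beta> * (deriv ^^ \<gamma>) g x)\<bar>"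
    by (simp add: deriv_lin[OF assms(1,2)] algebra_simps)
  also have "\<dots> \<le> \<bar>a\<bar> * \<bar>x ^ \<beta> * (deriv ^^ \<gamma>) f x\<bar> + \<bar>b\<bar> * \<bar>x ^ \<beta> * (deriv ^^ \<gamma>) g x\<bar>"
    using abs_triangle_ineq[of "a * (x ^ \<beta> * (deriv ^^ \<gamma>) f x)" "b * (x ^ \<beta> * (deriv ^^ \<gamma>) g x)"] by (simp add: abs_mult)
  also have "\<dots> \<le> \<bar>a\<bar> * M1 + \<bar>b\<bar> * M2"
    using assms(3,4) b g unfolding semi_def by (intro add_mono mult_left_mono) auto
  finally show "\<bar>x ^ \<beta> * (deriv ^^ \<gamma>) (\<lambda>x. a * f x + b * g x) x\<bar> \<le> \<bar>a\<bar> * M1 + \<bar>b\<bar> * M2" .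
qed

lemma temp_lin:
  assumes "tempered \<mu>" "\<phi> \<in> schwartz" "\<psi> \<in> schwartz"
  shows "\<mu> (\<lambda>x. a * \<phi> x + b * \<psi> x) = a * \<mu> \<phi> + b * \<mu> \<psi>"
  using assms unfolding tempered_def by blast

lemma temp_add:
  assumes "tempered \<mu>" "\<phi> \<in> schwartz" "\<psi> \<in> schwartz"
  shows "\<mu> (\<lambda>x. \<phi> x + \<psi> x) = \<mu> \<phi> + \<mu> \<psi>"
  using temp_lin[OF assms, of 1 1] by simp

lemma temp_diff:
  assumes "tempered \<mu>" "\<phi> \<in> schwartz" "\<psi> \<in> schwartz"
  shows "\<mu> (\<lambda>x. \<phi> x - \<psi> x) = \<mu> \<phi> - \<mu> \<psi>"
  using temp_lin[OF assms, of 1 "-1"] by simp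

lemma temp_scale:
  assumes "tempered \<mu>" "\<phi> \<in> schwartz"
  shows "\<mu> (\<lambda>x. a * \<phi> x) = a * \<mu> \<phi>"
  using temp_lin[OF assms assms(2), of a 0] by simp

lemma temp_bound:
  assumes "tempered \<mu>"
  shows "\<exists>C N. 0 \<le> C \<and> (\<forall>\<phi>\<in>schwartz. \<forall>M. semi N \<phi> M \<longrightarrow> \<bar>\<mu> \<phi>\<bar> \<le> C * M)"
proof -
  obtain C N where CN: "\<forall>\<phi>\<in>schwartz. \<forall>M. semi N \<phi> M \<longrightarrow> \<bar>\<mu> \<phi>\<bar> \<le> C * M"
    using assms unfolding tempered_def semi_def by blast
  have "\<forall>\<phi>\<in>schwartz. \<forall>M. semi N \<phi> M \<longrightarrow> \<bar>\<mu> \<phi>\<bar> \<le> max C 0 * M"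
  proof (intro ballI allI impI)
    fix \<phi> M assume "\<phi> \<in> schwartz" "semi N \<phi> M"
    then have "\<bar>\<mu> \<phi>\<bar> \<le> C * M" "0 \<le> M" using CN semi_nonneg by blast+
    moreover have "C * M \<le> max C 0 * M" using \<open>0 \<le> M\<close> by (intro mult_right_mono) auto
    ultimately show "\<bar>\<mu> \<phi>\<bar> \<le> max C 0 * M" by linarith
  qed
  then show ?thesis by (intro exI[of _ "max C 0"] exI[of _ N]) auto
qed

lemma semi_mono:
  assumes "semi N \<phi> M" "N' \<le> N" "M \<le> M'"
  shows "semi N' \<phi> M'"
  using assms unfolding semi_def by (meson order_trans)

lemma tempered_transl:
  assumes "tempered \<mu>"
  shows "tempered (transl a \<mu>)"
proof -
  have lin: "\<forall>\<phi>\<in>schwartz. \<forall>\<psi>\<in>schwartz. \<forall>c d. transl a \<mu> (\<lambda>x. c * \<phi> x + d * \<psi> x) = c * transl a \<mu> \<phi> + d * transl a \<mu> \<psi>"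
  proof (intro ballI allI)
    fix \<phi> \<psi> c d assume "\<phi> \<in> schwartz" "\<psi> \<in> schwartz"
    have "transl_fun a (\<lambda>x. c * \<phi> x + d * \<psi> x) = (\<lambda>x. c * transl_fun a \<phi> x + d * transl_fun a \<psi> x)"
      by (simp add: transl_fun_def)
    then show "transl a \<mu> (\<lambda>x. c * \<phi> x + d * \<psi> x) = c * transl a \<mu> \<phi> + d * transl a \<mu> \<psi>"
      unfolding transl_def using temp_lin[OF assms schwartz_transl schwartz_transl] \<open>\<phi> \<in> schwartz\<close> \<open>\<psi> \<in> schwartz\<close>
      by simp
  qed
  obtain C N where CN: "\<forall>\<phi>\<in>schwartz. \<forall>M. semi N \<phi> M \<longrightarrow> \<bar>\<mu> \<phi>\<bar> \<le> C * M"
    using temp_bound[OF assms] by blast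
  have "\<forall>\<phi>\<in>schwartz. \<forall>M. semi N \<phi> M \<longrightarrow> \<bar>transl a \<mu> \<phi>\<bar> \<le> (C * (1 + \<bar>a\<bar>) ^ N) * M"
  proof (intro ballI allI impI)
    fix \<phi> M assume p: "\<phi> \<in> schwartz" "semi N \<phi> M"
    have "smooth \<phi>" using p schwartz_def by blast
    then have "semi N (transl_fun a \<phi>) ((1 + \<bar>a\<bar>) ^ N * M)" using semi_transl p by blast
    then show "\<bar>transl a \<mu> \<phi>\<bar> \<le> (C * (1 + \<bar>a\<bar>) ^ N) * M"
      unfolding transl_def using CN schwartz_transl[OF p(1)] by (simp add: mult.assoc)
  qed
  then show ?thesis using lin unfolding tempered_def semi_def by blast
qed

lemma schwartz_semi_exists:
  assumes "\<phi> \<in> schwartz"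
  shows "\<exists>S. semi N \<phi> S"
proof -
  have "\<forall>\<beta> \<gamma>. \<exists>C. \<forall>x. \<bar>x ^ \<beta> * (deriv ^^ \<gamma>) \<phi> x\<bar> \<le> C" using assms schwartz_def by blast
  then obtain Cf where Cf: "\<And>\<beta> \<gamma> (x::real). \<bar>x ^ \<beta> * (deriv ^^ \<gamma>) \<phi> x\<bar> \<le> Cf \<beta> \<gamma>" by metis
  define S where "S = (\<Sum>\<beta>\<le>N. \<Sum>\<gamma>\<le>N. \<bar>Cf \<beta> \<gamma>\<bar>)"
  have "semi N \<phi> S" unfolding semi_def
  proof (intro allI impI)
    fix \<beta> \<gamma> x assume b: "\<beta> \<le> N" and g: "\<gamma> \<le> N"
    have "\<bar>Cf \<beta> \<gamma>\<bar> \<le> (\<Sum>\<gamma>\<le>N. \<bar>Cf \<beta> \<gamma>\<bar>)"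
      using g by (intro member_le_sum) auto
    also have "\<dots> \<le> S" unfolding S_def
      using b by (intro member_le_sum[of \<beta> "{..N}" "\<lambda>\<beta>. \<Sum>\<gamma>\<le>N. \<bar>Cf \<beta> \<gamma>\<bar>"]) (auto intro: sum_nonneg)
    finally have "\<bar>Cf \<beta> \<gamma>\<bar> \<le> S" .
    moreover have "\<bar>x ^ \<beta> * (deriv ^^ \<gamma>) \<phi> x\<bar> \<le> Cf \<beta> \<gamma>" by (rule Cf)
    ultimately show "\<bar>x ^ \<beta> * (deriv ^^ \<gamma>) \<phi> x\<bar> \<le> S" by linarith
  qed
  then show ?thesis by blast
qed

lemma deriv_zero: "(deriv ^^ k) (\<lambda>x::real. 0::real) = (\<lambda>x. 0)"
  by (induction k) auto

lemma schwartz_zero: "(\<lambda>x. 0) \<in> schwartz"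
  by (simp add: schwartz_def smooth_def deriv_zero; metis order_refl)

lemma schwartz_sum:
  fixes k :: nat
  assumes "\<And>i. i < k \<Longrightarrow> \<eta> i \<in> schwartz"
  shows "(\<lambda>x. \<Sum>i<k. \<eta> i x) \<in> schwartz"
  using assms
proof (induction k)
  case 0 then show ?case using schwartz_zero by simp
next
  case (Suc k)
  have "(\<lambda>x. 1 * (\<Sum>i<k. \<eta> i x) + 1 * \<eta> k x) \<in> schwartz"
    using Suc by (intro schwartz_lin) auto
  then show ?case by simp
qed

lemma temp_sum:
  fixes k :: nat
  assumes "tempered \<mu>" "\<And>i. i < k \<Longrightarrow> \<eta> i \<in> schwartz"
  shows "\<mu> (\<lambda>x. \<Sum>i<k. \<eta> i x) = (\<Sum>i<k. \<mu> (\<eta> i))"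
  using assms(2)
proof (induction k)
  case 0
  have "\<mu> (\<lambda>x. 0 * 0 + 0 * 0) = 0 * \<mu> (\<lambda>x. 0) + 0 * \<mu> (\<lambda>x. 0)"
    using temp_lin[OF assms(1) schwartz_zero schwartz_zero] .
  then show ?case by simp
next
  case (Suc k)
  have "\<mu> (\<lambda>x. (\<Sum>i<k. \<eta> i x) + \<eta> k x) = \<mu> (\<lambda>x. \<Sum>i<k. \<eta> i x) + \<mu> (\<eta> k)"
    using Suc by (intro temp_add assms(1) schwartz_sum) auto
  then show ?case using Suc by simp
qed

lemma geo_half: "summable (\<lambda>i. c * (1/2::real) ^ i)" "(\<Sum>i. c * (1/2::real) ^ i) = 2 * c"
proof -
  have s: "summable (\<lambda>i. (1/2::real) ^ i)" by (rule summable_geometric) simp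
  then show "summable (\<lambda>i. c * (1/2::real) ^ i)" by (rule summable_mult)
  have "(\<Sum>i. (1/2::real) ^ i) = 2" using suminf_geometric[of "1/2::real"] by simp
  then show "(\<Sum>i. c * (1/2::real) ^ i) = 2 * c" using suminf_mult[OF s, of c] by simp
qed

lemma series_schwartz:
  fixes \<eta> :: "nat \<Rightarrow> test" and n :: nat and c :: real
  assumes sch: "\<And>i. \<eta> i \<in> schwartz"
  and bd: "\<And>i \<beta> \<gamma> x. \<beta> \<le> n + i \<Longrightarrow> \<gamma> \<le> n + i \<Longrightarrow> \<bar>x ^ \<beta> * (deriv ^^ \<gamma>) (\<eta> i) x\<bar> \<le> c * (1/2) ^ i"
  shows "(\<lambda>x. \<Sum>i. \<eta> i x) \<in> schwartz \<and> semi n (\<lambda>x. \<Sum>i. \<eta> i x) (2 * c)"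
proof -
  have sm: "\<And>i. smooth (\<eta> i)" using sch schwartz_def by blast
  define G where "G k x = (\<Sum>i. (deriv ^^ k) (\<eta> i) x)" for k x
  have ebd: "\<bar>(deriv ^^ k) (\<eta> i) x\<bar> \<le> c * (1/2) ^ i" if "k \<le> i" for k i x
    using bd[of 0 i k x] that by simp
  have sumk: "summable (\<lambda>i. (deriv ^^ k) (\<eta> i) x)" for k x
    by (rule summable_comparison_test'[OF geo_half(1), of k]) (use ebd in auto)
  have der: "(G k has_real_derivative G (Suc k) x) (at x)" for k x
  proof -
    have ul: "uniform_limit UNIV (\<lambda>m x. \<Sum>i<m. (deriv ^^ Suc k) (\<eta> i) x) (G (Suc k)) sequentially"
      unfolding G_def
    proof (rule Weierstrass_m_test_ev[OF _ geo_half(1)])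
      show "\<forall>\<^sub>F i in sequentially. \<forall>x\<in>UNIV. norm ((deriv ^^ Suc k) (\<eta> i) x) \<le> c * (1/2) ^ i"
        unfolding eventually_sequentially real_norm_def using ebd[of "Suc k"] by blast
    qed
    have d: "\<And>i x. x \<in> UNIV \<Longrightarrow> ((deriv ^^ k) (\<eta> i) has_field_derivative (deriv ^^ Suc k) (\<eta> i) x) (at x within UNIV)"
      using smooth_DERIV[OF sm] by simp
    obtain g where g: "\<forall>x\<in>UNIV. (\<lambda>i. (deriv ^^ k) (\<eta> i) x) sums g x \<and> (g has_field_derivative G (Suc k) x) (at x within UNIV)"
      using has_field_derivative_series[OF convex_UNIV d ul UNIV_I sumk] by blast
    have "g = G k" unfolding G_def using g by (auto intro!: ext sums_unique)
    then show ?thesis using g by simp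
  qed
  have derk: "(deriv ^^ k) (\<lambda>x. \<Sum>i. \<eta> i x) = G k" for k
  proof (induction k)
    case 0 then show ?case by (simp add: G_def)
  next
    case (Suc k)
    have "(deriv ^^ Suc k) (\<lambda>x. \<Sum>i. \<eta> i x) = deriv (G k)" by (simp only: deriv_Suc Suc.IH)
    also have "\<dots> = G (Suc k)" by (intro ext DERIV_imp_deriv der)
    finally show ?case .
  qed
  have smooth: "smooth (\<lambda>x. \<Sum>i. \<eta> i x)"
    unfolding smooth_def derk using der by (auto simp: real_differentiable_def)
  have ptb: "\<bar>x ^ \<beta> * G \<gamma> x\<bar> \<le> suminf B"
    if B: "\<And>i. \<bar>x ^ \<beta> * (deriv ^^ \<gamma>) (\<eta> i) x\<bar> \<le> B i" and sB: "summable B" for x \<beta> \<gamma> B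
  proof -
    have e: "x ^ \<beta> * G \<gamma> x = (\<Sum>i. x ^ \<beta> * (deriv ^^ \<gamma>) (\<eta> i) x)"
      unfolding G_def using suminf_mult[OF sumk, of "x ^ \<beta>"] by simp
    have sa: "summable (\<lambda>i. \<bar>x ^ \<beta> * (deriv ^^ \<gamma>) (\<eta> i) x\<bar>)"
      by (rule summable_comparison_test'[OF sB, of 0]) (use B in auto)
    have "\<bar>x ^ \<beta> * G \<gamma> x\<bar> \<le> (\<Sum>i. \<bar>x ^ \<beta> * (deriv ^^ \<gamma>) (\<eta> i) x\<bar>)"
      unfolding e by (rule summable_rabs[OF sa])
    also have "\<dots> \<le> suminf B" by (rule suminf_le[OF B sa sB])
    finally show ?thesis .
  qed
  have bounds: "\<exists>C. \<forall>x. \<bar>x ^ \<beta> * (deriv ^^ \<gamma>) (\<lambda>x. \<Sum>i. \<eta> i x) x\<bar> \<le> C" for \<beta> \<gamma>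
  proof -
    have "\<forall>i. \<exists>C. \<forall>x. \<bar>x ^ \<beta> * (deriv ^^ \<gamma>) (\<eta> i) x\<bar> \<le> C" using sch schwartz_def by blast
    then obtain Cf where Cf: "\<And>i x. \<bar>x ^ \<beta> * (deriv ^^ \<gamma>) (\<eta> i) x\<bar> \<le> Cf i" by metis
    define B where "B i = (if i < \<beta> + \<gamma> then Cf i else c * (1/2) ^ i)" for i
    have Bb: "\<bar>x ^ \<beta> * (deriv ^^ \<gamma>) (\<eta> i) x\<bar> \<le> B i" for x i
      unfolding B_def using Cf bd[of \<beta> i \<gamma> x] by auto
    have sB: "summable B"
    proof (rule summable_comparison_test'[OF geo_half(1), of "\<beta> + \<gamma>"])
      fix i assume "\<beta> + \<gamma> \<le> i"
      then have "B i = c * (1/2) ^ i" unfolding B_def by auto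
      moreover have "0 \<le> c * (1/2::real) ^ i" using Bb[of 0 i] \<open>B i = c * (1/2) ^ i\<close> by (metis abs_ge_zero order_trans)
      ultimately show "norm (B i) \<le> c * (1/2) ^ i" by simp
    qed
    show ?thesis unfolding derk using ptb[OF Bb sB] by blast
  qed
  have "semi n (\<lambda>x. \<Sum>i. \<eta> i x) (2 * c)" unfolding semi_def derk
  proof (intro allI impI)
    fix \<beta> \<gamma> x assume "\<beta> \<le> n" "\<gamma> \<le> n"
    then have "\<And>i. \<bar>x ^ \<beta> * (deriv ^^ \<gamma>) (\<eta> i) x\<bar> \<le> c * (1/2) ^ i" by (intro bd) auto
    from ptb[OF this geo_half(1)] show "\<bar>x ^ \<beta> * G \<gamma> x\<bar> \<le> 2 * c" unfolding geo_half(2) .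
  qed
  then show ?thesis using smooth bounds unfolding schwartz_def by blast
qed

lemma semi_scale:
  assumes "smooth \<phi>" "semi N \<phi> M"
  shows "semi N (\<lambda>x. a * \<phi> x) (\<bar>a\<bar> * M)"
  using semi_lin[OF assms(1) assms(1) assms(2) assms(2), of a 0] by simp

lemma schwartz_scale:
  assumes "\<phi> \<in> schwartz"
  shows "(\<lambda>x. a * \<phi> x) \<in> schwartz"
  using schwartz_lin[OF assms assms, of a 0] by simp

lemma temp_zero: "tempered \<mu> \<Longrightarrow> \<mu> (\<lambda>x. 0) = 0"
  using temp_scale[OF _ schwartz_zero, of \<mu> 0] by simp

lemma semi_zero_fun:
  assumes "semi N \<phi> 0" shows "\<phi> = (\<lambda>x. 0)"
proof
  fix x
  have "\<bar>x ^ 0 * (deriv ^^ 0) \<phi> x\<bar> \<le> 0" using assms unfolding semi_def by blast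
  then show "\<phi> x = 0" by simp
qed

definition hump_ok :: "distr set \<Rightarrow> (nat \<Rightarrow> test \<times> distr \<times> real \<times> nat) \<Rightarrow> nat \<Rightarrow> test \<times> distr \<times> real \<times> nat \<Rightarrow> bool" where
 "hump_ok F f k r \<longleftrightarrow>
    fst (snd r) \<in> F \<and> fst r \<in> schwartz \<and> 0 \<le> fst (snd (snd r)) \<and>
    (\<forall>\<phi>\<in>schwartz. \<forall>M. semi (snd (snd (snd r))) \<phi> M \<longrightarrow> \<bar>fst (snd r) \<phi>\<bar> \<le> fst (snd (snd r)) * M) \<and>
    semi (k + (\<Sum>j<k. snd (snd (snd (f j))))) (fst r) ((1/2) ^ k / (1 + (\<Sum>j<k. fst (snd (snd (f j)))))) \<and>
    \<bar>fst (snd r) (\<lambda>x. \<Sum>j<k. fst (f j) x)\<bar> + real k + 1 \<le> \<bar>fst (snd r) (fst r)\<bar>"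

lemma UB:
  assumes F: "\<And>\<mu>. \<mu> \<in> F \<Longrightarrow> tempered \<mu>"
  and pb: "\<And>\<phi>. \<phi> \<in> schwartz \<Longrightarrow> \<exists>K. \<forall>\<mu>\<in>F. \<bar>\<mu> \<phi>\<bar> \<le> K"
  shows "\<exists>C N. \<forall>\<mu>\<in>F. \<forall>\<phi>\<in>schwartz. \<forall>M. semi N \<phi> M \<longrightarrow> \<bar>\<mu> \<phi>\<bar> \<le> C * M"
proof (rule ccontr)
  assume neg: "\<not> ?thesis"
  have fail: "\<exists>\<mu>\<in>F. \<exists>\<phi>\<in>schwartz. \<exists>M. semi N \<phi> M \<and> c * M < \<bar>\<mu> \<phi>\<bar>" for c N
  proof -
    have "\<not> (\<forall>\<mu>\<in>F. \<forall>\<phi>\<in>schwartz. \<forall>M. semi N \<phi> M \<longrightarrow> \<bar>\<mu> \<phi>\<bar> \<le> c * M)"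
      using neg by blast
    then show ?thesis by (auto simp: not_le)
  qed
  have fail2: "\<exists>\<mu>\<in>F. \<exists>\<eta>\<in>schwartz. semi N \<eta> a \<and> c < \<bar>\<mu> \<eta>\<bar>" if a: "a > 0" for c N a
  proof -
    obtain \<mu> \<phi> M where \<mu>: "\<mu> \<in> F" and \<phi>: "\<phi> \<in> schwartz" and sM: "semi N \<phi> M"
      and gt: "(c / a) * M < \<bar>\<mu> \<phi>\<bar>"
      using fail[where c="c / a" and N=N] by blast
    have M0: "0 \<le> M" using semi_nonneg[OF sM] .
    have "M \<noteq> 0"
    proof
      assume "M = 0"
      then have "\<phi> = (\<lambda>x. 0)" using semi_zero_fun sM by blast
      then have "\<mu> \<phi> = 0" using temp_zero F[OF \<mu>] by simp
      then show False using gt \<open>M = 0\<close> by simp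
    qed
    with M0 have Mp: "M > 0" by simp
    have sm: "smooth \<phi>" using \<phi> schwartz_def by blast
    define \<eta> where "\<eta> = (\<lambda>x. (a / M) * \<phi> x)"
    have "\<eta> \<in> schwartz" unfolding \<eta>_def by (rule schwartz_scale[OF \<phi>])
    moreover have "semi N \<eta> a"
      using semi_scale[OF sm sM, of "a / M"] Mp a unfolding \<eta>_def by simp
    moreover have "c < \<bar>\<mu> \<eta>\<bar>"
    proof -
      have "\<mu> \<eta> = (a / M) * \<mu> \<phi>" unfolding \<eta>_def by (rule temp_scale[OF F[OF \<mu>] \<phi>])
      then have "\<bar>\<mu> \<eta>\<bar> = (a / M) * \<bar>\<mu> \<phi>\<bar>" using Mp a by (simp add: abs_mult)
      moreover have "(a / M) * ((c / a) * M) < (a / M) * \<bar>\<mu> \<phi>\<bar>"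
        using gt Mp a by (intro mult_strict_left_mono) auto
      moreover have "(a / M) * ((c / a) * M) = c" using Mp a by simp
      ultimately show ?thesis by simp
    qed
    ultimately show ?thesis using \<mu> by blast
  qed
  have adm: "hump_ok F f k r = hump_ok F g k r" if "\<And>z. (z, k) \<in> less_than \<Longrightarrow> f z = g z" for f g k r
  proof -
    have e: "\<And>z. z < k \<Longrightarrow> f z = g z" using that by simp
    have "(\<Sum>j<k. snd (snd (snd (f j)))) = (\<Sum>j<k. snd (snd (snd (g j))))"
         "(\<Sum>j<k. fst (snd (snd (f j)))) = (\<Sum>j<k. fst (snd (snd (g j))))"
         "(\<lambda>x. \<Sum>j<k. fst (f j) x) = (\<lambda>x. \<Sum>j<k. fst (g j) x)"
      using e by (auto intro!: sum.cong ext)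
    then show ?thesis unfolding hump_ok_def by simp
  qed
  have step: "\<exists>r. hump_ok F f k r" if prev: "\<And>y. (y, k) \<in> less_than \<Longrightarrow> hump_ok F f y (f y)" for k f
  proof -
    have pv: "\<And>y. y < k \<Longrightarrow> hump_ok F f y (f y)" using prev by simp
    define D where "D = (\<Sum>j<k. fst (snd (snd (f j))))"
    define Nm where "Nm = (\<Sum>j<k. snd (snd (snd (f j))))"
    define s where "s = (\<lambda>x. \<Sum>j<k. fst (f j) x)"
    have D0: "0 \<le> D" unfolding D_def using pv unfolding hump_ok_def by (auto intro: sum_nonneg)
    have sS: "s \<in> schwartz" unfolding s_def using pv unfolding hump_ok_def by (intro schwartz_sum) auto
    obtain K where K: "\<forall>\<mu>\<in>F. \<bar>\<mu> s\<bar> \<le> K" using pb[OF sS] by blast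
    define a where "a = (1/2::real) ^ k / (1 + D)"
    have a0: "a > 0" unfolding a_def using D0 by simp
    obtain \<mu> \<eta> where \<mu>: "\<mu> \<in> F" and \<eta>: "\<eta> \<in> schwartz" and sa: "semi (k + Nm) \<eta> a"
      and big: "K + real k + 1 < \<bar>\<mu> \<eta>\<bar>"
      using fail2[OF a0, where c="K + real k + 1" and N="k + Nm"] by blast
    obtain C N' where C0: "0 \<le> C" and CN: "\<forall>\<phi>\<in>schwartz. \<forall>M. semi N' \<phi> M \<longrightarrow> \<bar>\<mu> \<phi>\<bar> \<le> C * M"
      using temp_bound[OF F[OF \<mu>]] by blast
    have "\<bar>\<mu> s\<bar> + real k + 1 \<le> \<bar>\<mu> \<eta>\<bar>" using K \<mu> big by (smt (verit))
    then have "hump_ok F f k (\<eta>, \<mu>, C, N')"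
      unfolding hump_ok_def using \<mu> \<eta> C0 CN sa unfolding a_def D_def Nm_def s_def by simp
    then show ?thesis by blast
  qed
  obtain f where f: "\<And>k. hump_ok F f k (f k)"
    using dependent_wf_choice[of less_than "hump_ok F", OF wf_less_than adm step] by blast
  define \<eta> where "\<eta> k = fst (f k)" for k
  define \<mu> where "\<mu> k = fst (snd (f k))" for k
  define C where "C k = fst (snd (snd (f k)))" for k
  define N where "N k = snd (snd (snd (f k)))" for k
  define D where "D k = (\<Sum>j<k. C j)" for k
  define Nm where "Nm k = (\<Sum>j<k. N j)" for k
  have \<mu>F: "\<mu> k \<in> F" and \<eta>S: "\<eta> k \<in> schwartz" and C0: "0 \<le> C k"
    and CN: "\<forall>\<phi>\<in>schwartz. \<forall>M. semi (N k) \<phi> M \<longrightarrow> \<bar>\<mu> k \<phi>\<bar> \<le> C k * M"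
    and sk: "semi (k + Nm k) (\<eta> k) ((1/2) ^ k / (1 + D k))"
    and bigk: "\<bar>\<mu> k (\<lambda>x. \<Sum>j<k. \<eta> j x)\<bar> + real k + 1 \<le> \<bar>\<mu> k (\<eta> k)\<bar>" for k
    using f[of k] unfolding hump_ok_def \<eta>_def \<mu>_def C_def N_def D_def Nm_def by auto
  have D0: "0 \<le> D k" for k unfolding D_def using C0 by (intro sum_nonneg) auto
  have hb: "(1/2::real) ^ k / (1 + D k) \<le> (1/2) ^ k" for k
    using D0[of k] by (simp add: divide_le_eq)
  have bd0: "\<bar>x ^ \<beta> * (deriv ^^ \<gamma>) (\<eta> i) x\<bar> \<le> 1 * (1/2) ^ i" if "\<beta> \<le> 0 + i" "\<gamma> \<le> 0 + i" for i \<beta> \<gamma> x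
  proof -
    have "\<bar>x ^ \<beta> * (deriv ^^ \<gamma>) (\<eta> i) x\<bar> \<le> (1/2) ^ i / (1 + D i)"
      using sk[of i] that unfolding semi_def by auto
    then show ?thesis using hb[of i] by simp
  qed
  define \<phi> where "\<phi> = (\<lambda>x. \<Sum>i. \<eta> i x)"
  have \<phi>S: "\<phi> \<in> schwartz" unfolding \<phi>_def using series_schwartz[OF \<eta>S bd0] by blast
  obtain K where K: "\<forall>\<mu>\<in>F. \<bar>\<mu> \<phi>\<bar> \<le> K" using pb[OF \<phi>S] by blast
  define k where "k = nat \<lceil>K\<rceil> + 1"
  have kK: "K < real k" unfolding k_def by linarith
  define r where "r = (\<lambda>x. \<Sum>i. \<eta> (i + Suc k) x)"
  define c where "c = (1/2::real) ^ Suc k / (1 + C k)"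
  have bdr: "\<bar>x ^ \<beta> * (deriv ^^ \<gamma>) (\<eta> (i + Suc k)) x\<bar> \<le> c * (1/2) ^ i"
    if "\<beta> \<le> N k + i" "\<gamma> \<le> N k + i" for i \<beta> \<gamma> x
  proof -
    have "N k \<le> Nm (i + Suc k)" unfolding Nm_def by (intro member_le_sum) auto
    then have "\<bar>x ^ \<beta> * (deriv ^^ \<gamma>) (\<eta> (i + Suc k)) x\<bar> \<le> (1/2) ^ (i + Suc k) / (1 + D (i + Suc k))"
      using sk[of "i + Suc k"] that unfolding semi_def by auto
    also have "\<dots> \<le> (1/2) ^ (i + Suc k) / (1 + C k)"
    proof -
      have "C k \<le> D (i + Suc k)" unfolding D_def using C0 by (intro member_le_sum) auto
      moreover have "0 \<le> C k" by (rule C0)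
      ultimately show ?thesis by (intro divide_left_mono mult_pos_pos) auto
    qed
    also have "\<dots> = c * (1/2) ^ i" unfolding c_def by (simp add: power_add)
    finally show ?thesis .
  qed
  have rr: "r \<in> schwartz \<and> semi (N k) r (2 * c)"
    unfolding r_def by (rule series_schwartz) (use \<eta>S bdr in auto)
  have rsmall: "\<bar>\<mu> k r\<bar> \<le> 1"
  proof -
    have "\<bar>\<mu> k r\<bar> \<le> C k * (2 * c)" using CN[of k] rr by blast
    also have "2 * c = (1/2) ^ k / (1 + C k)"
    proof -
      have ne: "1 + C k \<noteq> 0" using C0[of k] by linarith
      have "2 * c = (2 * (1/2) ^ Suc k) / (1 + C k)" unfolding c_def by (rule times_divide_eq_right)
      also have "2 * (1/2::real) ^ Suc k = (1/2) ^ k" by simp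
      finally show ?thesis .
    qed
    also have "C k * ((1/2) ^ k / (1 + C k)) \<le> 1"
    proof -
      have "C k * (1/2) ^ k \<le> C k * 1" using C0[of k] by (intro mult_left_mono) (auto simp: power_le_one)
      then have "C k * (1/2) ^ k \<le> 1 + C k" by simp
      then show ?thesis using C0[of k] by (simp add: pos_divide_le_eq)
    qed
    finally show ?thesis .
  qed
  have summ: "summable (\<lambda>i. \<eta> i x)" for x
  proof (rule summable_comparison_test'[OF geo_half(1)[of 1], of 0])
    fix i :: nat
    show "norm (\<eta> i x) \<le> 1 * (1/2) ^ i" using bd0[of 0 i 0 x] by simp
  qed
  define s where "s = (\<lambda>x. \<Sum>j<k. \<eta> j x)"
  have sS: "s \<in> schwartz" unfolding s_def using \<eta>S by (intro schwartz_sum)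
  have dec: "\<phi> = (\<lambda>x. (s x + \<eta> k x) + r x)"
  proof
    fix x
    show "\<phi> x = (s x + \<eta> k x) + r x"
      unfolding \<phi>_def r_def s_def using suminf_split_initial_segment[OF summ[of x], of "Suc k"]
      by simp
  qed
  have "\<mu> k \<phi> = (\<mu> k s + \<mu> k (\<eta> k)) + \<mu> k r"
  proof -
    have T: "tempered (\<mu> k)" using F \<mu>F by blast
    have "(\<lambda>x. s x + \<eta> k x) \<in> schwartz" using schwartz_lin[OF sS \<eta>S, of 1 1] by simp
    then have "\<mu> k \<phi> = \<mu> k (\<lambda>x. s x + \<eta> k x) + \<mu> k r"
      unfolding dec using temp_add[OF T _ conjunct1[OF rr]] by blast
    also have "\<mu> k (\<lambda>x. s x + \<eta> k x) = \<mu> k s + \<mu> k (\<eta> k)"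
      using temp_add[OF T sS \<eta>S] .
    finally show ?thesis .
  qed
  then have "real k \<le> \<bar>\<mu> k \<phi>\<bar>" using bigk[of k] rsmall unfolding s_def[symmetric] by linarith
  moreover have "\<bar>\<mu> k \<phi>\<bar> \<le> K" using K \<mu>F by blast
  ultimately show False using kK by linarith
qed

lemma mvt_sym:
  assumes "\<And>z. (g has_real_derivative g' z) (at z)"
  shows "\<exists>z. \<bar>z - u\<bar> \<le> \<bar>v - u\<bar> \<and> g v - g u = (v - u) * g' z"
proof (cases u v rule: linorder_cases)
  case less
  then obtain z where "u < z" "z < v" "g v - g u = (v - u) * g' z"
    using MVT2[OF less, of g g'] assms by blast
  then show ?thesis by (intro exI[of _ z]) auto
next
  case equal then show ?thesis by auto
next
  case greater
  then obtain z where z: "v < z" "z < u" "g u - g v = (u - v) * g' z"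
    using MVT2[OF greater, of g g'] assms by blast
  then have "g v - g u = (v - u) * g' z" by (simp add: algebra_simps)
  then show ?thesis using z by (intro exI[of _ z]) auto
qed

lemma semi_transl_diff:
  assumes sm: "smooth \<phi>" and S: "semi (Suc N) \<phi> S" and ab: "\<bar>a - b\<bar> \<le> 1"
  shows "semi N (\<lambda>x. transl_fun a \<phi> x - transl_fun b \<phi> x) (\<bar>a - b\<bar> * ((2 + \<bar>b\<bar>) ^ N * S))"
  unfolding semi_def
proof (intro allI impI)
  fix \<beta> \<gamma> x assume b: "\<beta> \<le> N" and g: "\<gamma> \<le> N"
  have S0: "0 \<le> S" using semi_nonneg[OF S] .
  have e1: "(\<lambda>x. transl_fun a \<phi> x - transl_fun b \<phi> x) = (\<lambda>x. 1 * transl_fun a \<phi> x + (-1) * transl_fun b \<phi> x)"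
    by simp
  have e2: "(deriv ^^ \<gamma>) (\<lambda>x. transl_fun a \<phi> x - transl_fun b \<phi> x) x
      = (deriv ^^ \<gamma>) \<phi> (x - a) - (deriv ^^ \<gamma>) \<phi> (x - b)"
    unfolding e1 deriv_lin[OF smooth_transl[OF sm] smooth_transl[OF sm]]
    by (simp only: deriv_transl[OF sm]) (simp add: transl_fun_def)
  obtain z where z: "\<bar>z - (x - b)\<bar> \<le> \<bar>(x - a) - (x - b)\<bar>"
    and mv: "(deriv ^^ \<gamma>) \<phi> (x - a) - (deriv ^^ \<gamma>) \<phi> (x - b) = ((x - a) - (x - b)) * (deriv ^^ Suc \<gamma>) \<phi> z"
    using mvt_sym[of "(deriv ^^ \<gamma>) \<phi>" "\<lambda>z. (deriv ^^ Suc \<gamma>) \<phi> z", OF smooth_DERIV[OF sm]] by blast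
  have xz: "\<bar>x - z\<bar> \<le> 1 + \<bar>b\<bar>" using z ab by (simp add: abs_minus_commute)
  define h where "h = (deriv ^^ Suc \<gamma>) \<phi> z"
  have m: "max \<bar>h\<bar> (\<bar>z\<bar> ^ \<beta> * \<bar>h\<bar>) \<le> S"
  proof -
    have "\<bar>z ^ 0 * h\<bar> \<le> S" "\<bar>z ^ \<beta> * h\<bar> \<le> S"
      using S b g unfolding semi_def h_def by (metis Suc_le_mono le0 le_SucI)+
    then show ?thesis by (simp add: abs_mult power_abs)
  qed
  have p: "(1 + \<bar>x - z\<bar>) ^ \<beta> \<le> (2 + \<bar>b\<bar>) ^ N"
  proof -
    have "(1 + \<bar>x - z\<bar>) ^ \<beta> \<le> (2 + \<bar>b\<bar>) ^ \<beta>" using xz by (intro power_mono) auto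
    also have "\<dots> \<le> (2 + \<bar>b\<bar>) ^ N" using b by (intro power_increasing) auto
    finally show ?thesis .
  qed
  have "\<bar>x ^ \<beta> * (deriv ^^ \<gamma>) (\<lambda>x. transl_fun a \<phi> x - transl_fun b \<phi> x) x\<bar> = \<bar>a - b\<bar> * (\<bar>x\<bar> ^ \<beta> * \<bar>h\<bar>)"
    unfolding e2 mv h_def by (simp add: abs_mult power_abs abs_minus_commute)
  also have "\<dots> \<le> \<bar>a - b\<bar> * ((1 + \<bar>x - z\<bar>) ^ \<beta> * max \<bar>h\<bar> (\<bar>z\<bar> ^ \<beta> * \<bar>h\<bar>))"
    by (intro mult_left_mono KI) auto
  also have "\<dots> \<le> \<bar>a - b\<bar> * ((2 + \<bar>b\<bar>) ^ N * S)"
    by (intro mult_left_mono mult_mono p m) (auto simp: S0)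
  finally show "\<bar>x ^ \<beta> * (deriv ^^ \<gamma>) (\<lambda>x. transl_fun a \<phi> x - transl_fun b \<phi> x) x\<bar> \<le> \<bar>a - b\<bar> * ((2 + \<bar>b\<bar>) ^ N * S)" .
qed

lemma paths_uniform:
  assumes X: "X \<in> pathsC T"
  shows "\<exists>C N. 0 \<le> C \<and> (\<forall>t\<in>{0..T}. \<forall>\<psi>\<in>schwartz. \<forall>M. semi N \<psi> M \<longrightarrow> \<bar>X t \<psi>\<bar> \<le> C * M)"
proof -
  have F: "\<And>\<mu>. \<mu> \<in> X ` {0..T} \<Longrightarrow> tempered \<mu>" using X unfolding pathsC_def by auto
  have pb: "\<exists>K. \<forall>\<mu>\<in>X ` {0..T}. \<bar>\<mu> \<psi>\<bar> \<le> K" if \<psi>: "\<psi> \<in> schwartz" for \<psi>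
  proof -
    have "continuous_on {0..T} (\<lambda>t. X t \<psi>)" using X \<psi> unfolding pathsC_def by blast
    then have "compact ((\<lambda>t. X t \<psi>) ` {0..T})" by (intro compact_continuous_image) auto
    then have "bounded ((\<lambda>t. X t \<psi>) ` {0..T})" by (rule compact_imp_bounded)
    then obtain K where "\<forall>y\<in>(\<lambda>t. X t \<psi>) ` {0..T}. \<bar>y\<bar> \<le> K" unfolding bounded_real by blast
    then show ?thesis by auto
  qed
  obtain C N where CN: "\<forall>\<mu>\<in>X ` {0..T}. \<forall>\<phi>\<in>schwartz. \<forall>M. semi N \<phi> M \<longrightarrow> \<bar>\<mu> \<phi>\<bar> \<le> C * M"
    using UB[OF F pb] by blast
  have "\<forall>t\<in>{0..T}. \<forall>\<psi>\<in>schwartz. \<forall>M. semi N \<psi> M \<longrightarrow> \<bar>X t \<psi>\<bar> \<le> max C 0 * M"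
  proof (intro ballI allI impI)
    fix t \<psi> M assume "t \<in> {0..T}" "\<psi> \<in> schwartz" "semi N \<psi> M"
    then have "\<bar>X t \<psi>\<bar> \<le> C * M" "0 \<le> M" using CN semi_nonneg by blast+
    moreover have "C * M \<le> max C 0 * M" using \<open>0 \<le> M\<close> by (intro mult_right_mono) auto
    ultimately show "\<bar>X t \<psi>\<bar> \<le> max C 0 * M" by linarith
  qed
  then show ?thesis by (intro exI[of _ "max C 0"] exI[of _ N]) auto
qed

lemma path_transl_cont:
  assumes X: "X \<in> pathsC T" and \<phi>: "\<phi> \<in> schwartz" and \<sigma>: "\<bar>\<sigma>\<bar> \<le> 1"
  shows "continuous_on {0..T} (\<lambda>t. X t (transl_fun (\<sigma> * t) \<phi>))"
proof -
  obtain C N where C0: "0 \<le> C" and CN: "\<forall>t\<in>{0..T}. \<forall>\<psi>\<in>schwartz. \<forall>M. semi N \<psi> M \<longrightarrow> \<bar>X t \<psi>\<bar> \<le> C * M"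
    using paths_uniform[OF X] by blast
  have sm: "smooth \<phi>" using \<phi> schwartz_def by blast
  obtain S where S: "semi (Suc N) \<phi> S" using schwartz_semi_exists[OF \<phi>] by blast
  have S0: "0 \<le> S" using semi_nonneg[OF S] .
  have temp: "\<And>t. t \<in> {0..T} \<Longrightarrow> tempered (X t)" using X unfolding pathsC_def by blast
  show ?thesis unfolding continuous_on_iff
  proof (intro ballI allI impI)
    fix t e :: real assume t: "t \<in> {0..T}" and e: "0 < e"
    define \<psi> where "\<psi> = transl_fun (\<sigma> * t) \<phi>"
    have \<psi>S: "\<psi> \<in> schwartz" unfolding \<psi>_def by (rule schwartz_transl[OF \<phi>])
    have "continuous_on {0..T} (\<lambda>s. X s \<psi>)" using X \<psi>S unfolding pathsC_def by blast
    then obtain d1 where d1: "d1 > 0" and d1b: "\<forall>s\<in>{0..T}. dist s t < d1 \<longrightarrow> dist (X s \<psi>) (X t \<psi>) < e / 2"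
      unfolding continuous_on_iff using t e by (meson half_gt_zero)
    define L where "L = (2 + \<bar>\<sigma> * t\<bar>) ^ N * S"
    have L0: "0 \<le> L" unfolding L_def using S0 by simp
    define d where "d = min d1 (min 1 ((e / 2) / (C * L + 1)))"
    have CL: "0 < C * L + 1" using C0 L0 by (simp add: add_nonneg_pos)
    have d0: "d > 0" unfolding d_def using d1 e CL by simp
    show "\<exists>d>0. \<forall>s\<in>{0..T}. dist s t < d \<longrightarrow> dist (X s (transl_fun (\<sigma> * s) \<phi>)) (X t (transl_fun (\<sigma> * t) \<phi>)) < e"
    proof (intro exI[of _ d] conjI ballI impI d0)
      fix s assume s: "s \<in> {0..T}" and ds: "dist s t < d"
      have st: "\<bar>s - t\<bar> < d" using ds by (simp add: dist_real_def)
      have sig: "\<bar>\<sigma> * s - \<sigma> * t\<bar> \<le> \<bar>s - t\<bar>"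
      proof -
        have "\<bar>\<sigma> * s - \<sigma> * t\<bar> = \<bar>\<sigma>\<bar> * \<bar>s - t\<bar>" by (simp add: abs_mult[symmetric] algebra_simps)
        also have "\<dots> \<le> 1 * \<bar>s - t\<bar>" using \<sigma> by (intro mult_right_mono) auto
        finally show ?thesis by simp
      qed
      have le1: "\<bar>\<sigma> * s - \<sigma> * t\<bar> \<le> 1" using sig st unfolding d_def by linarith
      define \<delta> where "\<delta> = (\<lambda>x. transl_fun (\<sigma> * s) \<phi> x - transl_fun (\<sigma> * t) \<phi> x)"
      have \<delta>S: "\<delta> \<in> schwartz" unfolding \<delta>_def using schwartz_lin[OF schwartz_transl[OF \<phi>] schwartz_transl[OF \<phi>], of 1 "\<sigma> * s" "-1" "\<sigma> * t"]
        by simp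
      have sd: "semi N \<delta> (\<bar>\<sigma> * s - \<sigma> * t\<bar> * L)"
        unfolding \<delta>_def L_def by (rule semi_transl_diff[OF sm S le1])
      have "\<bar>X s \<delta>\<bar> \<le> C * (\<bar>\<sigma> * s - \<sigma> * t\<bar> * L)" using CN s \<delta>S sd by blast
      also have "\<dots> \<le> C * (\<bar>s - t\<bar> * L)" using C0 L0 sig by (intro mult_left_mono mult_right_mono) auto
      also have "\<dots> \<le> (C * L + 1) * \<bar>s - t\<bar>" using C0 L0 by (simp add: algebra_simps)
      also have "\<dots> \<le> (C * L + 1) * ((e / 2) / (C * L + 1))"
        using st CL unfolding d_def by (intro mult_left_mono) auto
      also have "\<dots> = e / 2"
      proof -
        have ne: "C * L + 1 \<noteq> 0" using CL by simp
        have a: "(C * L + 1) * ((e / 2) / (C * L + 1)) = (C * L + 1) * (e / 2) / (C * L + 1)"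
          by (rule times_divide_eq_right)
        show ?thesis unfolding a by (rule nonzero_mult_div_cancel_left[OF ne])
      qed
      finally have 1: "\<bar>X s \<delta>\<bar> \<le> e / 2" .
      have "X s \<delta> = X s (transl_fun (\<sigma> * s) \<phi>) - X s \<psi>"
        unfolding \<delta>_def \<psi>_def by (rule temp_diff[OF temp[OF s] schwartz_transl[OF \<phi>] schwartz_transl[OF \<phi>]])
      moreover have "\<bar>X s \<psi> - X t \<psi>\<bar> < e / 2" using d1b s ds unfolding d_def dist_real_def by auto
      ultimately have "\<bar>X s (transl_fun (\<sigma> * s) \<phi>) - X t \<psi>\<bar> < e" using 1 by linarith
      then show "dist (X s (transl_fun (\<sigma> * s) \<phi>)) (X t (transl_fun (\<sigma> * t) \<phi>)) < e"
        unfolding \<psi>_def dist_real_def .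
    qed
  qed
qed

lemma Gmap_paths:
  assumes X: "X \<in> pathsC T"
  shows "Gmap X \<in> pathsC T"
proof -
  have "tempered (Gmap X t)" if "t \<in> {0..T}" for t
    unfolding Gmap_def using X that tempered_transl unfolding pathsC_def by blast
  moreover have "continuous_on {0..T} (\<lambda>t. Gmap X t \<phi>)" if "\<phi> \<in> schwartz" for \<phi>
    using path_transl_cont[OF X that, of 1] unfolding Gmap_def transl_def by simp
  ultimately show ?thesis unfolding pathsC_def by blast
qed

definition Hmap :: "(real \<Rightarrow> distr) \<Rightarrow> (real \<Rightarrow> distr)" where
  "Hmap X = (\<lambda>t. transl (- t) (X t))"

lemma Hmap_paths:
  assumes X: "X \<in> pathsC T"
  shows "Hmap X \<in> pathsC T"
proof -
  have "tempered (Hmap X t)" if "t \<in> {0..T}" for t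
    unfolding Hmap_def using X that tempered_transl unfolding pathsC_def by blast
  moreover have "continuous_on {0..T} (\<lambda>t. Hmap X t \<phi>)" if "\<phi> \<in> schwartz" for \<phi>
    using path_transl_cont[OF X that, of "-1"] unfolding Hmap_def transl_def by simp
  ultimately show ?thesis unfolding pathsC_def by blast
qed

lemma HG: "Hmap (Gmap X) = X"
proof (intro ext)
  fix t \<phi>
  have "transl_fun t (transl_fun (- t) \<phi>) = \<phi>" by (simp add: transl_fun_def)
  then show "Hmap (Gmap X) t \<phi> = X t \<phi>" unfolding Hmap_def Gmap_def transl_def by simp
qed

lemma Gmap_paths_rev: "Gmap Y \<in> pathsC T \<Longrightarrow> Y \<in> pathsC T"
  using Hmap_paths[of "Gmap Y" T] HG by simp

lemma bounded_transl:
  assumes B: "schwartz_bounded B"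
  shows "schwartz_bounded {transl_fun t \<phi> | t \<phi>. t \<in> {0..T} \<and> \<phi> \<in> B}"
proof -
  have BS: "B \<subseteq> schwartz" using B schwartz_bounded_def by blast
  have "\<exists>C. \<forall>\<psi>\<in>{transl_fun t \<phi> | t \<phi>. t \<in> {0..T} \<and> \<phi> \<in> B}. \<forall>x. \<bar>x ^ \<beta> * (deriv ^^ \<gamma>) \<psi> x\<bar> \<le> C" for \<beta> \<gamma>
  proof -
    obtain C0 where C0: "\<forall>\<phi>\<in>B. \<forall>x. \<bar>x ^ 0 * (deriv ^^ \<gamma>) \<phi> x\<bar> \<le> C0"
      using B unfolding schwartz_bounded_def by blast
    obtain C1 where C1: "\<forall>\<phi>\<in>B. \<forall>x. \<bar>x ^ \<beta> * (deriv ^^ \<gamma>) \<phi> x\<bar> \<le> C1"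
      using B unfolding schwartz_bounded_def by blast
    have bnd: "\<bar>x ^ \<beta> * (deriv ^^ \<gamma>) (transl_fun t \<phi>) x\<bar> \<le> (1 + \<bar>T\<bar>) ^ \<beta> * max C0 C1"
      if t: "t \<in> {0..T}" and \<phi>: "\<phi> \<in> B" for t \<phi> x
    proof -
      have sm: "smooth \<phi>" using BS \<phi> schwartz_def by blast
      have m: "max \<bar>(deriv ^^ \<gamma>) \<phi> (x - t)\<bar> \<bar>(x - t) ^ \<beta> * (deriv ^^ \<gamma>) \<phi> (x - t)\<bar> \<le> max C0 C1"
      proof -
        have "\<bar>(x - t) ^ 0 * (deriv ^^ \<gamma>) \<phi> (x - t)\<bar> \<le> C0" using C0 \<phi> by blast
        then have a: "\<bar>(deriv ^^ \<gamma>) \<phi> (x - t)\<bar> \<le> C0" by simp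
        have b: "\<bar>(x - t) ^ \<beta> * (deriv ^^ \<gamma>) \<phi> (x - t)\<bar> \<le> C1" using C1 \<phi> by blast
        show ?thesis by (rule max.mono[OF a b])
      qed
      have p: "(1 + \<bar>t\<bar>) ^ \<beta> \<le> (1 + \<bar>T\<bar>) ^ \<beta>" using t by (intro power_mono) auto
      have "(1 + \<bar>t\<bar>) ^ \<beta> * max \<bar>(deriv ^^ \<gamma>) \<phi> (x - t)\<bar> \<bar>(x - t) ^ \<beta> * (deriv ^^ \<gamma>) \<phi> (x - t)\<bar>
            \<le> (1 + \<bar>T\<bar>) ^ \<beta> * max C0 C1"
        by (rule mult_mono[OF p m]) auto
      then show ?thesis by (rule order_trans[OF transl_pt[OF sm]])
    qed
    show ?thesis
    proof (intro exI[of _ "(1 + \<bar>T\<bar>) ^ \<beta> * max C0 C1"] ballI allI)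
      fix \<psi> x assume "\<psi> \<in> {transl_fun t \<phi> | t \<phi>. t \<in> {0..T} \<and> \<phi> \<in> B}"
      then obtain t \<phi> where "\<psi> = transl_fun t \<phi>" "t \<in> {0..T}" "\<phi> \<in> B" by blast
      then show "\<bar>x ^ \<beta> * (deriv ^^ \<gamma>) \<psi> x\<bar> \<le> (1 + \<bar>T\<bar>) ^ \<beta> * max C0 C1"
        using bnd by simp
    qed
  qed
  moreover have "{transl_fun t \<phi> | t \<phi>. t \<in> {0..T} \<and> \<phi> \<in> B} \<subseteq> schwartz"
  proof
    fix \<psi> assume "\<psi> \<in> {transl_fun t \<phi> | t \<phi>. t \<in> {0..T} \<and> \<phi> \<in> B}"
    then obtain t \<phi> where "\<psi> = transl_fun t \<phi>" "\<phi> \<in> B" by blast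
    then show "\<psi> \<in> schwartz" using BS schwartz_transl by blast
  qed
  ultimately show ?thesis unfolding schwartz_bounded_def by blast
qed

lemma topspace_paths: "topspace (pathsC_topology T) = pathsC T"
proof -
  have "pathsC T \<subseteq> \<Union>{pathball T X B \<epsilon> | X B \<epsilon>. X \<in> pathsC T \<and> schwartz_bounded B \<and> \<epsilon> > 0}"
  proof
    fix X assume X: "X \<in> pathsC T"
    have "schwartz_bounded {}" unfolding schwartz_bounded_def by simp
    moreover have "X \<in> pathball T X {} 1" unfolding pathball_def using X by (auto intro!: exI[of _ 0])
    ultimately have "pathball T X {} 1 \<in> {pathball T X B \<epsilon> | X B \<epsilon>. X \<in> pathsC T \<and> schwartz_bounded B \<and> \<epsilon> > 0}"
      using X by (intro CollectI exI[of _ X] exI[of _ "{}"] exI[of _ "1::real"]) simp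
    then show "X \<in> \<Union>{pathball T X B \<epsilon> | X B \<epsilon>. X \<in> pathsC T \<and> schwartz_bounded B \<and> \<epsilon> > 0}"
      using \<open>X \<in> pathball T X {} 1\<close> by (rule UnionI)
  qed
  moreover have "\<Union>{pathball T X B \<epsilon> | X B \<epsilon>. X \<in> pathsC T \<and> schwartz_bounded B \<and> \<epsilon> > 0} \<subseteq> pathsC T"
  proof
    fix Y assume "Y \<in> \<Union>{pathball T X B \<epsilon> | X B \<epsilon>. X \<in> pathsC T \<and> schwartz_bounded B \<and> \<epsilon> > 0}"
    then obtain X B \<epsilon> where "Y \<in> pathball T X B \<epsilon>" by blast
    then show "Y \<in> pathsC T" unfolding pathball_def by blast
  qed
  ultimately show ?thesis unfolding pathsC_topology_def by simp
qed

theorem proposition3: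
  fixes T :: real
  assumes "T > 0"
  shows "Gmap \<in> pathsC T \<rightarrow> pathsC T \<and>
         continuous_map (pathsC_topology T) (pathsC_topology T) Gmap"
proof
  show G: "Gmap \<in> pathsC T \<rightarrow> pathsC T" using Gmap_paths by blast
  define Bs where "Bs = {pathball T X B \<epsilon> | X B \<epsilon>. X \<in> pathsC T \<and> schwartz_bounded B \<and> \<epsilon> > 0}"
  have top: "pathsC_topology T = topology_generated_by Bs" unfolding pathsC_topology_def Bs_def ..
  have tsp: "topspace (topology_generated_by Bs) = pathsC T" unfolding top[symmetric] by (rule topspace_paths)
  have "continuous_map (topology_generated_by Bs) (topology_generated_by Bs) Gmap"
  proof (rule continuous_on_generated_topo)
    have UB: "\<Union>Bs = pathsC T" using tsp by (simp only: topology_generated_by_topspace)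
    show "Gmap ` topspace (topology_generated_by Bs) \<subseteq> \<Union> Bs"
      unfolding tsp UB by (intro image_subsetI) (rule funcset_mem[OF G])
  next
    fix U assume "U \<in> Bs"
    then obtain X B \<epsilon> where X: "X \<in> pathsC T" and B: "schwartz_bounded B" and \<epsilon>: "\<epsilon> > 0"
      and U: "U = pathball T X B \<epsilon>" unfolding Bs_def by blast
    show "openin (topology_generated_by Bs) (Gmap -` U \<inter> topspace (topology_generated_by Bs))"
      unfolding tsp
    proof (subst openin_subopen, intro ballI)
      fix Y assume Y: "Y \<in> Gmap -` U \<inter> pathsC T"
      then have YP: "Y \<in> pathsC T" by blast
      from Y have "Gmap Y \<in> pathball T X B \<epsilon>" unfolding U by blast
      then obtain e where e: "e < \<epsilon>" and eb: "\<forall>t\<in>{0..T}. \<forall>\<phi>\<in>B. \<bar>Gmap Y t \<phi> - X t \<phi>\<bar> \<le> e"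
        unfolding pathball_def by blast
      define B' where "B' = {transl_fun t \<phi> | t \<phi>. t \<in> {0..T} \<and> \<phi> \<in> B}"
      have B': "schwartz_bounded B'" unfolding B'_def by (rule bounded_transl[OF B])
      define W where "W = pathball T Y B' (\<epsilon> - e)"
      have "W \<in> Bs" unfolding W_def Bs_def using YP B' e
        by (intro CollectI exI[of _ Y] exI[of _ B'] exI[of _ "\<epsilon> - e"]) simp
      then have "openin (topology_generated_by Bs) W" by (rule topology_generated_by_Basis)
      moreover have "Y \<in> W" unfolding W_def pathball_def using YP e by (auto intro!: exI[of _ 0])
      moreover have "W \<subseteq> Gmap -` U \<inter> pathsC T"
      proof
        fix Z assume "Z \<in> W"
        then obtain e' where ZP: "Z \<in> pathsC T" and e': "e' < \<epsilon> - e"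
          and eb': "\<forall>t\<in>{0..T}. \<forall>\<psi>\<in>B'. \<bar>Z t \<psi> - Y t \<psi>\<bar> \<le> e'"
          unfolding W_def pathball_def by blast
        have "\<bar>Gmap Z t \<phi> - X t \<phi>\<bar> \<le> e' + e" if t: "t \<in> {0..T}" and \<phi>: "\<phi> \<in> B" for t \<phi>
        proof -
          have "transl_fun t \<phi> \<in> B'" unfolding B'_def using t \<phi> by blast
          then have "\<bar>Z t (transl_fun t \<phi>) - Y t (transl_fun t \<phi>)\<bar> \<le> e'" using eb' t by blast
          moreover have "\<bar>Y t (transl_fun t \<phi>) - X t \<phi>\<bar> \<le> e" using eb t \<phi> unfolding Gmap_def transl_def by blast
          ultimately show ?thesis unfolding Gmap_def transl_def by linarith
        qed
        moreover have "e' + e < \<epsilon>" using e' by linarith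
        ultimately have "Gmap Z \<in> pathball T X B \<epsilon>"
          unfolding pathball_def using Gmap_paths[OF ZP] by blast
        then show "Z \<in> Gmap -` U \<inter> pathsC T" using U ZP by blast
      qed
      ultimately show "\<exists>W. openin (topology_generated_by Bs) W \<and> Y \<in> W \<and> W \<subseteq> Gmap -` U \<inter> pathsC T"
        by blast
    qed
  qed
  then show "continuous_map (pathsC_topology T) (pathsC_topology T) Gmap" unfolding top .
qed

end
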